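(* Let $G_m$ be a bounded Vilenkin group and let $\varphi:P_+\to[1,\infty)$ be a nondecreasing function with $\limsup_{n\to\infty}\frac{\log^2(n+1)}{\varphi(n)}=+\infty$. Then the maximal operator $f\mapsto \sup_{n\in P_+}\frac{|\sigma_nf|}{\varphi(n)}$ is not bounded from $H_{1/2}(G_m)$ to $L_{1/2}(G_m)$; i.e., there is no constant $c<\infty$ such that $\big\|\sup_{n\in P_+}\frac{|\sigma_nf|}{\varphi(n)}\big\|_{L_{1/2}}\le c\|f\|_{H_{1/2}}$ for all martingales $f\in H_{1/2}(G_m)$.
   Context: Let $P_+$ be the positive integers and $P=P_+\cup\{0\}$. Let $m=(m_0,m_1,\dots)$ be a sequence of integers $m_k\ge 2$ with $\sup_k m_k<\infty$. $G_m$ is the complete direct product of the cyclic groups $Z_{m_k}$, with Haar measure $\mu$ = product of the uniform probability measures on $Z_{m_k}$. Put $M_0=1$, $M_{k+1}=m_kM_k$. For $x\in G_m$, $I_n(x)=\{y: y_j=x_j,\ 0\le j<n\}$. Every $n\in P$ is written uniquely as $n=\sum_j n_jM_j$, $n_j\in Z_{m_j}$. Rademacher functions $r_k(x)=\exp(2\pi i x_k/m_k)$; Vilenkin system $\psi_n=\prod_k r_k^{n_k}$. $\mathcal F_n$ is the $\sigma$-algebra generated by the sets $I_n(x)$. For a martingale $f=(f^{(n)})$ w.r.t. $(\mathcal F_n)$, $f^*=\sup_n|f^{(n)}|$; $H_p(G_m)$ consists of martingales with $\|f\|_{H_p}:=\|f^*\|_{L_p}<\infty$, $\|g\|_{L_p}=(\int|g|^pd\mu)^{1/p}$.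 $\hat f(i)=\lim_{k}\int f^{(k)}\overline{\psi_i}\,d\mu$, $S_nf=\sum_{k=0}^{n-1}\hat f(k)\psi_k$, $\sigma_nf=\frac1n\sum_{k=0}^{n-1}S_kf$. $\log$ denotes a fixed logarithm. *)

theory Defs
  imports "HOL-Probability.Probability"
begin

text \<open>Vilenkin group G_m, represented as sequences x :: nat => nat with x k < m k,
  equipped with the product of the uniform probability measures on Z_{m_k}.\<close>

definition vilenkin_measure :: "(nat \<Rightarrow> nat) \<Rightarrow> (nat \<Rightarrow> nat) measure" where
  "vilenkin_measure m = (\<Pi>\<^sub>M k\<in>(UNIV::nat set). uniform_count_measure {..<m k})"

definition vM :: "(nat \<Rightarrow> nat) \<Rightarrow> nat \<Rightarrow> nat" where
  "vM m k = (\<Prod>j<k. m j)"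

definition vdigit :: "(nat \<Rightarrow> nat) \<Rightarrow> nat \<Rightarrow> nat \<Rightarrow> nat" where
  "vdigit m n k = (n div vM m k) mod m k"

definition rademacher :: "(nat \<Rightarrow> nat) \<Rightarrow> nat \<Rightarrow> (nat \<Rightarrow> nat) \<Rightarrow> complex" where
  "rademacher m k x = cis (2 * pi * real (x k) / real (m k))"

text \<open>Vilenkin functions psi_n = prod_k r_k^{n_k}; only finitely many digits are nonzero
  (all with k <= n, since M_k >= 2^k), so the product is over k <= n.\<close>
definition vpsi :: "(nat \<Rightarrow> nat) \<Rightarrow> nat \<Rightarrow> (nat \<Rightarrow> nat) \<Rightarrow> complex" where
  "vpsi m n x = (\<Prod>k\<le>n. rademacher m k x ^ vdigit m n k)"

text \<open>A function is F_n-measurable iff it is constant on each atom I_n(x) of F_n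
  (F_n is generated by the finitely many sets I_n(x)).\<close>
definition Fn_measurable :: "(nat \<Rightarrow> nat) \<Rightarrow> nat \<Rightarrow> ((nat \<Rightarrow> nat) \<Rightarrow> complex) \<Rightarrow> bool" where
  "Fn_measurable m n g \<longleftrightarrow>
     (\<forall>x\<in>space (vilenkin_measure m). \<forall>y\<in>space (vilenkin_measure m).
        (\<forall>j<n. y j = x j) \<longrightarrow> g y = g x)"

text \<open>Martingales w.r.t. (F_n): f^(n) is F_n-measurable and E(f^(n+1) | F_n) = f^(n);
  the conditional expectation onto F_n of an F_{n+1}-measurable function is the average
  over the n-th coordinate.\<close>
definition vmartingale :: "(nat \<Rightarrow> nat) \<Rightarrow> (nat \<Rightarrow> (nat \<Rightarrow> nat) \<Rightarrow> complex) \<Rightarrow> bool" where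
  "vmartingale m f \<longleftrightarrow>
     (\<forall>n. Fn_measurable m n (f n)) \<and>
     (\<forall>n. \<forall>x\<in>space (vilenkin_measure m).
        f n x = (\<Sum>j<m n. f (Suc n) (x(n := j))) / of_nat (m n))"

definition mart_max :: "(nat \<Rightarrow> (nat \<Rightarrow> nat) \<Rightarrow> complex) \<Rightarrow> (nat \<Rightarrow> nat) \<Rightarrow> ennreal" where
  "mart_max f x = (SUP n. ennreal (cmod (f n x)))"

definition Lp_qnorm :: "'a measure \<Rightarrow> real \<Rightarrow> ('a \<Rightarrow> ennreal) \<Rightarrow> ennreal" where
  "Lp_qnorm M p g =
     (let I = (\<integral>\<^sup>+ x. (if g x = \<top> then \<top> else ennreal (enn2real (g x) powr p)) \<partial>M)
      in if I = \<top> then \<top> else ennreal (enn2real I powr (1 / p)))"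

definition Hp_norm :: "(nat \<Rightarrow> nat) \<Rightarrow> real \<Rightarrow> (nat \<Rightarrow> (nat \<Rightarrow> nat) \<Rightarrow> complex) \<Rightarrow> ennreal" where
  "Hp_norm m p f = Lp_qnorm (vilenkin_measure m) p (mart_max f)"

definition vfourier :: "(nat \<Rightarrow> nat) \<Rightarrow> (nat \<Rightarrow> (nat \<Rightarrow> nat) \<Rightarrow> complex) \<Rightarrow> nat \<Rightarrow> complex" where
  "vfourier m f i = lim (\<lambda>k. \<integral>x. f k x * cnj (vpsi m i x) \<partial>vilenkin_measure m)"

definition vpartial_sum :: "(nat \<Rightarrow> nat) \<Rightarrow> (nat \<Rightarrow> (nat \<Rightarrow> nat) \<Rightarrow> complex) \<Rightarrow> nat \<Rightarrow> (nat \<Rightarrow> nat) \<Rightarrow> complex" where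
  "vpartial_sum m f n x = (\<Sum>k<n. vfourier m f k * vpsi m k x)"

definition vfejer :: "(nat \<Rightarrow> nat) \<Rightarrow> (nat \<Rightarrow> (nat \<Rightarrow> nat) \<Rightarrow> complex) \<Rightarrow> nat \<Rightarrow> (nat \<Rightarrow> nat) \<Rightarrow> complex" where
  "vfejer m f n x = (\<Sum>k<n. vpartial_sum m f k x) / of_nat n"

end

theory Submission
  imports Defs
begin

lemma pps: fixes m :: "nat \<Rightarrow> nat" assumes "\<And>k. m k > 0"
  shows "product_prob_space (\<lambda>k. uniform_count_measure {..<m k})"
proof -
  have p: "\<And>k. prob_space (uniform_count_measure {..<m k})"
    using assms by (intro prob_space_uniform_count_measure) auto
  show ?thesis
    unfolding product_prob_space_def product_prob_space_axioms_def product_sigma_finite_def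
    using p prob_space_imp_sigma_finite by blast
qed

lemma space_vm: "space (vilenkin_measure m) = {x. \<forall>k. x k < m k}"
  by (auto simp: vilenkin_measure_def space_PiM space_uniform_count_measure PiE_def Pi_def extensional_def)

definition cyl :: "(nat \<Rightarrow> nat) \<Rightarrow> nat \<Rightarrow> (nat \<Rightarrow> nat) \<Rightarrow> (nat \<Rightarrow> nat) set" where
  "cyl m K a = {x \<in> space (vilenkin_measure m). \<forall>j<K. x j = a j}"

lemma cyl_eq: "cyl m K a = prod_emb UNIV (\<lambda>k. uniform_count_measure {..<m k}) {..<K} (PiE {..<K} (\<lambda>j. {a j}))"
  by (auto simp: cyl_def prod_emb_def vilenkin_measure_def space_PiM PiE_iff restrict_def extensional_def fun_eq_iff space_uniform_count_measure Pi_iff)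

lemma sets_cyl[measurable]: assumes "\<And>j. j < K \<Longrightarrow> a j < m j"
  shows "cyl m K a \<in> sets (vilenkin_measure m)"
  unfolding cyl_eq vilenkin_measure_def
  by (rule sets_PiM_I) (auto simp: sets_uniform_count_measure assms)

lemma emeasure_cyl:
  assumes m: "\<And>k. m k > 0" and a: "\<And>j. j < K \<Longrightarrow> a j < m j"
  shows "emeasure (vilenkin_measure m) (cyl m K a) = ennreal (1 / real (vM m K))"
proof -
  interpret P: product_prob_space "\<lambda>k. uniform_count_measure {..<m k}" UNIV
    using pps[OF m] .
  have "emeasure (vilenkin_measure m) (cyl m K a) = (\<Prod>j<K. emeasure (uniform_count_measure {..<m j}) {a j})"
    unfolding cyl_eq vilenkin_measure_def
    by (rule P.emeasure_PiM_emb) (auto simp: sets_uniform_count_measure a)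
  also have "\<dots> = (\<Prod>j<K. ennreal (1 / real (m j)))"
    using a by (intro prod.cong refl) (auto simp: emeasure_uniform_count_measure ennreal_of_nat_eq_real_of_nat divide_ennreal m)
  also have "\<dots> = ennreal (\<Prod>j<K. 1 / real (m j))"
    by (simp add: prod_ennreal)
  also have "(\<Prod>j<K. 1 / real (m j)) = 1 / real (vM m K)"
    by (simp add: vM_def prod_dividef)
  finally show ?thesis .
qed

lemma measure_cyl:
  assumes m: "\<And>k. m k > 0" and a: "\<And>j. j < K \<Longrightarrow> a j < m j"
  shows "measure (vilenkin_measure m) (cyl m K a) = 1 / real (vM m K)"
  using emeasure_cyl[OF assms] by (simp add: measure_def)

lemma prob_vm: assumes m: "\<And>k. m k > 0" shows "prob_space (vilenkin_measure m)"
proof -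
  interpret P: product_prob_space "\<lambda>k. uniform_count_measure {..<m k}" UNIV
    using pps[OF m] .
  show ?thesis unfolding vilenkin_measure_def by (rule P.prob_space_axioms)
qed

lemma vM_0[simp]: "vM m 0 = 1" by (simp add: vM_def)
lemma vM_Suc: "vM m (Suc k) = m k * vM m k" by (simp add: vM_def)

lemma vM_pos: assumes "\<forall>k. m k \<ge> 2" shows "vM m k > 0"
proof (induction k)
  case (Suc k) then show ?case using assms by (simp add: vM_Suc) (metis not_numeral_le_zero not_gr0)
qed simp

lemma vM_ge: assumes "\<forall>k. m k \<ge> 2" shows "vM m k \<ge> 2 ^ k"
proof (induction k)
  case (Suc k) then show ?case using assms by (simp add: vM_Suc mult_mono)
qed simp

lemma vM_gt: assumes "\<forall>k. m k \<ge> 2" shows "k < vM m k"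
  using vM_ge[OF assms, of k] less_exp[of k] by linarith

lemma vM_split: "k < K \<Longrightarrow> \<exists>e. vM m K = vM m k * m k * e"
proof (induction K)
  case (Suc K)
  show ?case
  proof (cases "k = K")
    case True then show ?thesis by (auto simp: vM_Suc mult.commute)
  next
    case False
    with Suc obtain e where "vM m K = vM m k * m k * e" by auto
    then show ?thesis by (intro exI[of _ "e * m K"]) (simp add: vM_Suc)
  qed
qed simp

lemma vM_split2: "K \<le> k \<Longrightarrow> \<exists>e. vM m k = vM m K * e"
proof (induction k)
  case (Suc k)
  show ?case
  proof (cases "K = Suc k")
    case True then show ?thesis by auto
  next
    case False
    with Suc obtain e where "vM m k = vM m K * e" by auto
    then show ?thesis by (intro exI[of _ "e * m k"]) (simp add: vM_Suc)
  qed
qed simp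

lemma vM_mono: assumes "\<forall>k. m k \<ge> 2" "K \<le> k" shows "vM m K \<le> vM m k"
proof -
  obtain e where e: "vM m k = vM m K * e" using vM_split2[OF assms(2)] by blast
  with vM_pos[OF assms(1), of k] have "e > 0" by (cases e) auto
  then show ?thesis using e by simp
qed

lemma vdigit_small: assumes "\<forall>k. m k \<ge> 2" "b < vM m k" shows "vdigit m b k = 0"
  using assms by (simp add: vdigit_def)

lemma vdigit_low:
  assumes "k < K"
  shows "vdigit m (a * vM m K + b) k = vdigit m b k" "vdigit m (a * vM m K) k = 0"
proof -
  obtain e where e: "vM m K = vM m k * m k * e" using vM_split[OF assms] by blast
  have "vdigit m (a * vM m K + b) k = ((a * m k * e * vM m k + b) div vM m k) mod m k"
    by (simp add: vdigit_def e mult_ac)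
  also have "\<dots> = vdigit m b k"
  proof (cases "vM m k = 0")
    case True then show ?thesis by (simp add: vdigit_def)
  next
    case False
    then have "(a * m k * e * vM m k + b) div vM m k = b div vM m k + (a * e) * m k" by simp
    then show ?thesis by (simp only: vdigit_def mod_mult_self1)
  qed
  finally show "vdigit m (a * vM m K + b) k = vdigit m b k" .
  have "vdigit m (a * vM m K) k = ((a * m k * e * vM m k) div vM m k) mod m k"
    by (simp add: vdigit_def e mult_ac)
  also have "\<dots> = 0" by (cases "vM m k = 0") auto
  finally show "vdigit m (a * vM m K) k = 0" .
qed

lemma vdigit_high:
  assumes "K \<le> k" "b < vM m K"
  shows "vdigit m (a * vM m K + b) k = vdigit m (a * vM m K) k"
proof -
  obtain e where e: "vM m k = vM m K * e" using vM_split2[OF assms(1)] by blast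
  have "(a * vM m K + b) div vM m k = a div e"
    using assms(2) by (simp add: e div_mult2_eq)
  moreover have "(a * vM m K) div vM m k = a div e"
    using assms(2) by (simp add: e div_mult2_eq)
  ultimately show ?thesis by (simp add: vdigit_def)
qed

lemma vpsi_alt:
  assumes m: "\<forall>k. m k \<ge> 2" and i: "i < vM m L"
  shows "vpsi m i x = (\<Prod>k<L. rademacher m k x ^ vdigit m i k)"
proof -
  let ?g = "\<lambda>k. rademacher m k x ^ vdigit m i k"
  have zero: "?g k = 1" if "i < vM m k" for k using vdigit_small[OF m that] by simp
  have A: "\<forall>k\<in>{..<max (Suc i) L} - {..i}. ?g k = 1"
  proof
    fix k assume "k \<in> {..<max (Suc i) L} - {..i}"
    then have "i < k" by auto
    then show "?g k = 1" using vM_gt[OF m, of k] zero by auto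
  qed
  have B: "\<forall>k\<in>{..<max (Suc i) L} - {..<L}. ?g k = 1"
  proof
    fix k assume "k \<in> {..<max (Suc i) L} - {..<L}"
    then have "L \<le> k" by auto
    then show "?g k = 1" using vM_mono[OF m \<open>L \<le> k\<close>] i zero by auto
  qed
  have "vpsi m i x = prod ?g {..<max (Suc i) L}"
    unfolding vpsi_def by (rule prod.mono_neutral_left) (use A in auto)
  also have "\<dots> = prod ?g {..<L}"
    by (rule prod.mono_neutral_right) (use B in auto)
  finally show ?thesis .
qed

lemma vpsi_mult:
  assumes m: "\<forall>k. m k \<ge> 2" and b: "b < vM m K"
  shows "vpsi m (a * vM m K + b) x = vpsi m (a * vM m K) x * vpsi m b x"
proof -
  define L where "L = a * vM m K + b + K"
  have L1: "a * vM m K + b < vM m L" using vM_gt[OF m, of L] by (simp add: L_def)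
  have L2: "a * vM m K < vM m L" "b < vM m L" using L1 by auto
  show ?thesis
    unfolding vpsi_alt[OF m L1] vpsi_alt[OF m L2(1)] vpsi_alt[OF m L2(2)] prod.distrib[symmetric]
  proof (rule prod.cong[OF refl])
    fix k assume "k \<in> {..<L}"
    show "rademacher m k x ^ vdigit m (a * vM m K + b) k =
          rademacher m k x ^ vdigit m (a * vM m K) k * rademacher m k x ^ vdigit m b k"
    proof (cases "k < K")
      case True then show ?thesis by (simp add: vdigit_low)
    next
      case False
      then have "K \<le> k" by simp
      have "vdigit m b k = 0" using vdigit_small[OF m] vM_mono[OF m \<open>K \<le> k\<close>] b by auto
      then show ?thesis using vdigit_high[OF \<open>K \<le> k\<close> b] by simp
    qed
  qed
qed

lemma vpsi_zeroI:
  assumes m: "\<forall>k. m k \<ge> 2" and x: "\<forall>j<t. x j = 0" and b: "b < vM m (Suc t)"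
  shows "vpsi m b x = rademacher m t x ^ (b div vM m t)"
proof -
  have "vpsi m b x = (\<Prod>k<Suc t. rademacher m k x ^ vdigit m b k)" by (rule vpsi_alt[OF m b])
  also have "\<dots> = rademacher m t x ^ vdigit m b t"
    using x by (simp add: rademacher_def)
  also have "vdigit m b t = b div vM m t"
  proof -
    have "b div vM m t < m t" using b vM_pos[OF m, of t]
      by (simp add: vM_Suc div_less_iff_less_mult mult.commute)
    then show ?thesis by (simp add: vdigit_def)
  qed
  finally show ?thesis .
qed

lemma norm_rademacher[simp]: "cmod (rademacher m k x) = 1"
  by (simp add: rademacher_def)

lemma norm_vpsi[simp]: "cmod (vpsi m i x) = 1"
  by (simp add: vpsi_def prod_norm[symmetric] norm_power)

lemma sum_lessThan_add: "(\<Sum>q<n+(k::nat). f q) = (\<Sum>q<n. f q) + (\<Sum>c<k. f (n + c))"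
  by (induction k) (auto simp: add.assoc)

lemma cis_root_pow:
  assumes "m > 0" shows "cis (2 * pi * real a / real m) ^ m = 1"
proof -
  have "cis (2 * pi * real a / real m) ^ m = cis (real m * (2 * pi * real a / real m))"
    by (rule Complex.DeMoivre)
  also have "real m * (2 * pi * real a / real m) = 2 * pi * real a" using assms by simp
  finally have "cis (2 * pi * real a / real m) ^ m = cis (2 * pi * real a)" .
  also have "\<dots> = 1" by (rule cis_multiple_2pi) simp
  finally show ?thesis .
qed

lemma cis_root_ne1:
  assumes "0 < a" "a < m" shows "cis (2 * pi * real a / real m) \<noteq> 1"
proof
  assume "cis (2 * pi * real a / real m) = 1"
  then have "cos (2 * pi * real a / real m) = 1" by (metis cis.sel(1) one_complex.sel(1))
  then obtain n :: int where n: "2 * pi * real a / real m = n * 2 * pi" by (auto simp: cos_one_2pi_int)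
  have "real m > 0" using assms by simp
  then have "real a = n * real m" using n by (simp add: field_simps)
  then have "real a / real m = n" using \<open>real m > 0\<close> by simp
  moreover have "0 < real a / real m" "real a / real m < 1" using assms by auto
  ultimately show False by (metis of_int_0_less_iff of_int_less_1_iff not_less zero_less_one_class.zero_le_one linorder_not_le int_one_le_iff_zero_less) 
qed

lemma sum_root_zero:
  fixes \<rho> :: complex
  assumes "\<rho> ^ m = 1" "\<rho> \<noteq> 1" shows "(\<Sum>a<m. \<rho> ^ a) = 0"
  using assms by (simp add: sum_gp_strict)

lemma dsum_h:
  fixes \<rho> :: complex
  assumes M: "M > 0" and c: "c \<le> M"
  shows "(\<Sum>b<a*M + c. \<rho> ^ (b div M)) = of_nat M * (\<Sum>a'<a. \<rho> ^ a') + of_nat c * \<rho> ^ a"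
  using c
proof (induction a arbitrary: c)
  case 0
  then show ?case by (induction c) auto
next
  case (Suc a)
  have base: "(\<Sum>b<a*M + M. \<rho> ^ (b div M)) = of_nat M * (\<Sum>a'<Suc a. \<rho> ^ a')"
    using Suc.IH[of M] by (simp add: algebra_simps)
  show ?case using Suc.prems
  proof (induction c)
    case 0 then show ?case using base by (simp add: add.commute)
  next
    case (Suc c)
    have "(c + Suc a * M) div M = Suc a + c div M" by (rule div_mult_self1) (use M in simp)
    also have "c div M = 0" using Suc.prems by simp
    finally have "(M + a * M + c) div M = Suc a" by (simp add: algebra_simps)
    with Suc show ?case by (simp add: algebra_simps)
  qed
qed

lemma dsum:
  fixes \<rho> :: complex
  assumes M: "M > 0" and r1: "\<rho> ^ m = 1" and r2: "\<rho> \<noteq> 1"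
  shows "(\<Sum>q<m*M. \<Sum>b<q. \<rho> ^ (b div M)) = of_nat (M * M * m) / (1 - \<rho>)"
proof -
  define S where "S = (\<Sum>c<M. of_nat c :: complex)"
  have T: "(\<Sum>q<a*M. \<Sum>b<q. \<rho> ^ (b div M)) =
     (\<Sum>a'<a. of_nat M * of_nat M * (\<Sum>i<a'. \<rho> ^ i) + S * \<rho> ^ a')" for a
  proof (induction a)
    case (Suc a)
    have "(\<Sum>q<Suc a*M. \<Sum>b<q. \<rho> ^ (b div M)) =
       (\<Sum>q<a*M. \<Sum>b<q. \<rho> ^ (b div M)) + (\<Sum>c<M. \<Sum>b<a*M + c. \<rho> ^ (b div M))"
    proof -
      have "Suc a * M = a * M + M" by simp
      then show ?thesis by (simp only: sum_lessThan_add)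
    qed
    also have "(\<Sum>c<M. \<Sum>b<a*M + c. \<rho> ^ (b div M)) =
        (\<Sum>c<M. of_nat M * (\<Sum>a'<a. \<rho> ^ a') + of_nat c * \<rho> ^ a)"
      by (intro sum.cong refl dsum_h[OF M]) auto
    also have "\<dots> = of_nat M * of_nat M * (\<Sum>i<a. \<rho> ^ i) + S * \<rho> ^ a"
      by (simp add: sum.distrib S_def sum_distrib_right)
    finally show ?case using Suc.IH by simp
  qed simp
  have G: "(\<Sum>a'<m. (\<Sum>i<a'. \<rho> ^ i)) = of_nat m / (1 - \<rho>)"
  proof -
    have "(\<Sum>a'<m. (\<Sum>i<a'. \<rho> ^ i)) = (\<Sum>a'<m. (1 - \<rho> ^ a') / (1 - \<rho>))"
      using r2 by (simp add: sum_gp_strict)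
    also have "\<dots> = (of_nat m - (\<Sum>a'<m. \<rho> ^ a')) / (1 - \<rho>)"
      by (simp add: sum_divide_distrib[symmetric] sum_subtractf)
    also have "\<dots> = of_nat m / (1 - \<rho>)" using sum_root_zero[OF r1 r2] by simp
    finally show ?thesis .
  qed
  have "(\<Sum>q<m*M. \<Sum>b<q. \<rho> ^ (b div M)) =
      of_nat M * of_nat M * (\<Sum>a'<m. (\<Sum>i<a'. \<rho> ^ i)) + S * (\<Sum>a'<m. \<rho> ^ a')"
    by (simp add: T sum.distrib sum_distrib_left)
  also have "\<dots> = of_nat M * of_nat M * (of_nat m / (1 - \<rho>))"
    using G sum_root_zero[OF r1 r2] by simp
  finally show ?thesis by simp
qed

definition zI :: "nat \<Rightarrow> (nat \<Rightarrow> nat) \<Rightarrow> bool" where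
  "zI K x \<longleftrightarrow> (\<forall>j<K. x j = 0)"

definition fN :: "(nat \<Rightarrow> nat) \<Rightarrow> nat \<Rightarrow> nat \<Rightarrow> (nat \<Rightarrow> nat) \<Rightarrow> complex" where
  "fN m N k x = (if k \<le> N then 0 else
     (if zI (Suc N) x then of_nat (vM m (Suc N)) else 0) - (if zI N x then of_nat (vM m N) else 0))"

lemma zI_Suc: "zI (Suc N) x \<longleftrightarrow> zI N x \<and> x N = 0"
  by (auto simp: zI_def less_Suc_eq)

lemma zI_upd: "N \<le> n \<Longrightarrow> zI N (x(n := j)) = zI N x"
  by (auto simp: zI_def)

lemma fN_mart:
  assumes m2: "\<forall>k. 2 \<le> m k"
  shows "vmartingale m (fN m N)"
  unfolding vmartingale_def
proof (intro conjI allI ballI)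
  fix n
  show "Fn_measurable m n (fN m N n)"
    unfolding Fn_measurable_def
  proof (intro ballI impI)
    fix x y :: "nat \<Rightarrow> nat" assume xy: "\<forall>j<n. y j = x j"
    show "fN m N n y = fN m N n x"
    proof (cases "n \<le> N")
      case True then show ?thesis by (simp add: fN_def)
    next
      case False
      then have "zI (Suc N) y = zI (Suc N) x" "zI N y = zI N x" using xy by (auto simp: zI_def)
      then show ?thesis by (simp add: fN_def)
    qed
  qed
next
  fix n x
  have mn: "m n > 0" using m2 by (metis not_numeral_le_zero not_gr0)
  consider "Suc n \<le> N" | "n = N" | "N < n" by linarith
  then show "fN m N n x = (\<Sum>j<m n. fN m N (Suc n) (x(n := j))) / of_nat (m n)"
  proof cases
    case 1 then show ?thesis by (simp add: fN_def)
  next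
    case 2
    have "(\<Sum>j<m n. fN m N (Suc n) (x(n := j))) =
          (\<Sum>j<m n. (if zI N x \<and> j = 0 then of_nat (vM m (Suc N)) else 0) - (if zI N x then of_nat (vM m N) else 0))"
      using 2 by (intro sum.cong refl) (auto simp: fN_def zI_Suc zI_upd)
    also have "\<dots> = 0" using 2 mn by (simp add: sum_subtractf vM_Suc)
    finally show ?thesis using 2 by (simp add: fN_def)
  next
    case 3
    have "(\<Sum>j<m n. fN m N (Suc n) (x(n := j))) = (\<Sum>j<m n. fN m N n x)"
      using 3 by (intro sum.cong refl) (auto simp: fN_def zI_upd)
    then show ?thesis using mn by simp
  qed
qed

lemma vpsi_zI: "\<forall>k. 2 \<le> m k \<Longrightarrow> zI t x \<Longrightarrow> b < vM m (Suc t) \<Longrightarrow> vpsi m b x = rademacher m t x ^ (b div vM m t)"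
  using vpsi_zeroI by (auto simp: zI_def)

lemma fourier_int:
  assumes m2: "\<forall>k. 2 \<le> m k" and k: "N < k" and i: "i < vM m (Suc N)"
  shows "(\<integral>x. fN m N k x * cnj (vpsi m i x) \<partial>vilenkin_measure m) = (if i < vM m N then 0 else 1)"
proof -
  have mpos: "\<And>k. m k > 0" using m2 by (metis not_numeral_le_zero not_gr0)
  define d where "d = i div vM m N"
  have dm: "d < m N" using i vM_pos[OF m2, of N]
    by (simp add: d_def vM_Suc div_less_iff_less_mult mult.commute)
  define \<omega> where "\<omega> a = cis (2 * pi * real a / real (m N))" for a
  define C where "C a = cyl m (Suc N) (\<lambda>j. if j = N then a else 0)" for a
  define c where "c a = ((if a = 0 then of_nat (vM m (Suc N)) else 0) - of_nat (vM m N)) * cnj (\<omega> a ^ d)" for a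
  have Cs: "C a \<in> sets (vilenkin_measure m)" if "a < m N" for a
    unfolding C_def using that mpos by (intro sets_cyl) auto
  have Cm: "measure (vilenkin_measure m) (C a) = 1 / real (vM m (Suc N))" if "a < m N" for a
    unfolding C_def using that mpos by (intro measure_cyl) auto
  interpret P: prob_space "vilenkin_measure m" by (rule prob_vm[OF mpos])
  have pw: "fN m N k x * cnj (vpsi m i x) = (\<Sum>a<m N. indicator (C a) x *\<^sub>R c a)"
    if x: "x \<in> space (vilenkin_measure m)" for x
  proof (cases "zI N x")
    case True
    have xN: "x N < m N" using x by (simp add: space_vm)
    have ind: "indicator (C a) x = (if a = x N then 1 else (0::real))" for a
      using True x by (auto simp: C_def cyl_def zI_def indicator_def less_Suc_eq)
    have "(\<Sum>a<m N. indicator (C a) x *\<^sub>R c a) = c (x N)"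
      using xN by (simp add: ind if_distrib[of "\<lambda>r. r *\<^sub>R _"] sum.delta cong: if_cong)
    moreover have "vpsi m i x = \<omega> (x N) ^ d"
      using vpsi_zI[OF m2 True i] by (simp add: \<omega>_def rademacher_def d_def)
    ultimately show ?thesis using k True by (simp add: fN_def c_def zI_Suc)
  next
    case False
    have ind: "indicator (C a) x = (0::real)" for a
      using False x by (auto simp: C_def cyl_def zI_def indicator_def less_Suc_eq)
    show ?thesis using False k by (simp add: fN_def ind zI_Suc)
  qed
  have "(\<integral>x. fN m N k x * cnj (vpsi m i x) \<partial>vilenkin_measure m) =
        (\<integral>x. (\<Sum>a<m N. indicator (C a) x *\<^sub>R c a) \<partial>vilenkin_measure m)"
    using pw by (intro Bochner_Integration.integral_cong) auto
  also have "\<dots> = (\<Sum>a<m N. (\<integral>x. indicator (C a) x *\<^sub>R c a \<partial>vilenkin_measure m))"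
    by (rule Bochner_Integration.integral_sum[where f="\<lambda>a x. indicator (C a) x *\<^sub>R c a"]) (auto intro!: integrable_scaleR_left integrable_indicator Cs simp: less_top[symmetric] P.emeasure_finite)
  also have "\<dots> = (\<Sum>a<m N. c a / of_nat (vM m (Suc N)))"
  proof (intro sum.cong refl)
    fix a assume "a \<in> {..<m N}"
    then have a: "a < m N" by simp
    have "(\<integral>x. indicator (C a) x *\<^sub>R c a \<partial>vilenkin_measure m) = measure (vilenkin_measure m) (C a) *\<^sub>R c a"
      using Cs[OF a] by (subst integral_scaleR_left) (auto intro!: integrable_indicator simp: less_top[symmetric] P.emeasure_finite Int_absorb2 sets.sets_into_space)
    then show "(\<integral>x. indicator (C a) x *\<^sub>R c a \<partial>vilenkin_measure m) = c a / of_nat (vM m (Suc N))"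
      using Cm[OF a] by (simp add: scaleR_conv_of_real divide_complex_def)
  qed
  also have "\<dots> = (\<Sum>a<m N. c a) / of_nat (vM m (Suc N))"
    by (simp add: sum_divide_distrib)
  also have "(\<Sum>a<m N. c a) = of_nat (vM m (Suc N)) - of_nat (vM m N) * (\<Sum>a<m N. cnj (\<omega> a ^ d))"
  proof -
    have "(\<Sum>a<m N. c a) = (\<Sum>a<m N. (if a = 0 then of_nat (vM m (Suc N)) * cnj (\<omega> a ^ d) else 0) - of_nat (vM m N) * cnj (\<omega> a ^ d))"
      by (intro sum.cong refl) (simp add: c_def algebra_simps)
    also have "\<dots> = of_nat (vM m (Suc N)) - of_nat (vM m N) * (\<Sum>a<m N. cnj (\<omega> a ^ d))"
      using mpos[of N] by (simp add: sum_subtractf sum_distrib_left \<omega>_def)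
    finally show ?thesis .
  qed
  finally have eq: "(\<integral>x. fN m N k x * cnj (vpsi m i x) \<partial>vilenkin_measure m) =
      (of_nat (vM m (Suc N)) - of_nat (vM m N) * (\<Sum>a<m N. cnj (\<omega> a ^ d))) / of_nat (vM m (Suc N))" .
  have wa: "\<omega> a ^ d = \<omega> d ^ a" for a
  proof -
    have "\<omega> a ^ d = cis (real d * (2 * pi * real a / real (m N)))" unfolding \<omega>_def by (rule Complex.DeMoivre)
    also have "\<dots> = cis (real a * (2 * pi * real d / real (m N)))" by (simp add: algebra_simps)
    also have "\<dots> = \<omega> d ^ a" unfolding \<omega>_def by (rule Complex.DeMoivre[symmetric])
    finally show ?thesis .
  qed
  show ?thesis
  proof (cases "i < vM m N")
    case True
    then have "d = 0" by (simp add: d_def)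
    then show ?thesis using eq True vM_pos[OF m2, of "Suc N"] by (simp add: vM_Suc)
  next
    case False
    then have "d > 0" using vM_pos[OF m2, of N] by (simp add: d_def div_greater_zero_iff)
    have "(\<Sum>a<m N. cnj (\<omega> a ^ d)) = cnj (\<Sum>a<m N. \<omega> d ^ a)" by (simp add: wa)
    also have "(\<Sum>a<m N. \<omega> d ^ a) = 0"
      using sum_root_zero[of "\<omega> d" "m N"] cis_root_pow[of "m N" d] cis_root_ne1[OF \<open>d > 0\<close> dm] mpos[of N]
      by (simp add: \<omega>_def)
    finally show ?thesis using eq False vM_pos[OF m2, of "Suc N"] by simp
  qed
qed

lemma vfourier_fN:
  assumes m2: "\<forall>k. 2 \<le> m k" and i: "i < vM m (Suc N)"
  shows "vfourier m (fN m N) i = (if i < vM m N then 0 else 1)"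
  unfolding vfourier_def
proof (rule limI)
  show "(\<lambda>k. \<integral>x. fN m N k x * cnj (vpsi m i x) \<partial>vilenkin_measure m) \<longlonglongrightarrow> (if i < vM m N then 0 else 1)"
    by (rule tendsto_eventually) (use fourier_int[OF m2 _ i] in \<open>auto simp: eventually_at_top_linorder intro!: exI[of _ "Suc N"]\<close>)
qed

lemma fejer_fN:
  assumes m2: "\<forall>k. 2 \<le> m k" and tN: "t < N" and x: "zI t x" and xt: "0 < x t" "x t < m t"
  shows "cmod (vfejer m (fN m N) (vM m N + vM m (Suc t)) x) \<ge>
           real (vM m t * vM m (Suc t)) / (2 * real (vM m N + vM m (Suc t)))"
proof -
  define A where "A = vM m N"
  define Q where "Q = vM m (Suc t)"
  define \<rho> where "\<rho> = rademacher m t x"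
  have QA: "Q \<le> A" unfolding Q_def A_def using vM_mono[OF m2, of "Suc t" N] tN by simp
  have A2: "A + A \<le> vM m (Suc N)" using m2 by (simp add: A_def vM_Suc) (metis mult_2 mult_le_mono1 spec)
  have coef: "vfourier m (fN m N) i = (if i < A then 0 else 1)" if "i < A + Q" for i
    using vfourier_fN[OF m2, of i N] that QA A2 by (simp add: A_def)
  have S0: "vpartial_sum m (fN m N) k x = 0" if "k \<le> A" for k
    unfolding vpartial_sum_def using that QA by (intro sum.neutral) (auto simp: coef)
  have S1: "vpartial_sum m (fN m N) (A + q) x = vpsi m A x * (\<Sum>b<q. \<rho> ^ (b div vM m t))" if "q \<le> Q" for q
  proof -
    have "vpartial_sum m (fN m N) (A + q) x = (\<Sum>i<A. vfourier m (fN m N) i * vpsi m i x) +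
          (\<Sum>b<q. vfourier m (fN m N) (A + b) * vpsi m (A + b) x)"
      unfolding vpartial_sum_def by (rule sum_lessThan_add)
    also have "(\<Sum>i<A. vfourier m (fN m N) i * vpsi m i x) = 0"
      using QA by (intro sum.neutral) (auto simp: coef)
    also have "(\<Sum>b<q. vfourier m (fN m N) (A + b) * vpsi m (A + b) x) = (\<Sum>b<q. vpsi m A x * \<rho> ^ (b div vM m t))"
    proof (intro sum.cong refl)
      fix b assume "b \<in> {..<q}"
      then have b: "b < q" by simp
      have "vfourier m (fN m N) (A + b) = 1" using coef[of "A + b"] b that by simp
      moreover have "vpsi m (A + b) x = vpsi m A x * vpsi m b x"
        using vpsi_mult[OF m2, of b N 1 x] b that QA by (simp add: A_def)
      moreover have "vpsi m b x = \<rho> ^ (b div vM m t)"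
        using vpsi_zI[OF m2 x, of b] b that by (simp add: Q_def \<rho>_def)
      ultimately show "vfourier m (fN m N) (A + b) * vpsi m (A + b) x = vpsi m A x * \<rho> ^ (b div vM m t)" by simp
    qed
    finally show ?thesis by (simp add: sum_distrib_left)
  qed
  have mt: "m t > 0" using xt by simp
  have r1: "\<rho> ^ m t = 1" unfolding \<rho>_def rademacher_def by (rule cis_root_pow[OF mt])
  have r2: "\<rho> \<noteq> 1" unfolding \<rho>_def rademacher_def by (rule cis_root_ne1[OF xt])
  have Mt: "vM m t > 0" using vM_pos[OF m2] .
  have "(\<Sum>k<A + Q. vpartial_sum m (fN m N) k x) =
        (\<Sum>k<A. vpartial_sum m (fN m N) k x) + (\<Sum>q<Q. vpartial_sum m (fN m N) (A + q) x)"
    by (rule sum_lessThan_add)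
  also have "(\<Sum>k<A. vpartial_sum m (fN m N) k x) = 0" by (intro sum.neutral) (auto simp: S0)
  also have "(\<Sum>q<Q. vpartial_sum m (fN m N) (A + q) x) = vpsi m A x * (\<Sum>q<Q. \<Sum>b<q. \<rho> ^ (b div vM m t))"
    by (simp add: S1 sum_distrib_left)
  also have "(\<Sum>q<Q. \<Sum>b<q. \<rho> ^ (b div vM m t)) = of_nat (vM m t * vM m t * m t) / (1 - \<rho>)"
    unfolding Q_def vM_Suc by (rule dsum[OF Mt r1 r2])
  finally have sumeq: "(\<Sum>k<A + Q. vpartial_sum m (fN m N) k x) = vpsi m A x * (of_nat (vM m t * vM m t * m t) / (1 - \<rho>))"
    by simp
  have n1: "cmod (1 - \<rho>) \<le> 2"
    using norm_triangle_ineq4[of 1 \<rho>] by (simp add: \<rho>_def)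
  have n2: "cmod (1 - \<rho>) > 0" using r2 by simp
  have "cmod (vfejer m (fN m N) (A + Q) x) = real (vM m t * vM m t * m t) / cmod (1 - \<rho>) / real (A + Q)"
    unfolding vfejer_def sumeq by (simp add: norm_mult norm_divide del: of_nat_add)
  also have "\<dots> \<ge> real (vM m t * vM m t * m t) / 2 / real (A + Q)"
    using n1 n2 by (intro divide_right_mono divide_left_mono) auto
  finally show ?thesis by (simp add: A_def Q_def vM_Suc mult_ac)
qed

definition lqi :: "('a \<Rightarrow> ennreal) \<Rightarrow> 'a \<Rightarrow> ennreal" where
  "lqi g x = (if g x = \<top> then \<top> else ennreal (enn2real (g x) powr (1/2)))"

lemma Lp_half: "Lp_qnorm M (1/2) g =
   (if integral\<^sup>N M (lqi g) = \<top> then \<top> else ennreal ((enn2real (integral\<^sup>N M (lqi g)))\<^sup>2))"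
proof -
  have "enn2real (integral\<^sup>N M (lqi g)) powr 2 = (enn2real (integral\<^sup>N M (lqi g)))\<^sup>2"
    by (simp add: enn2real_nonneg)
  then show ?thesis unfolding Lp_qnorm_def Let_def lqi_def[symmetric] by simp
qed

lemma Lp_upper:
  assumes "integral\<^sup>N M (lqi g) \<le> ennreal r" "0 \<le> r"
  shows "Lp_qnorm M (1/2) g \<le> ennreal (r\<^sup>2)" "Lp_qnorm M (1/2) g < \<top>"
proof -
  have nt: "integral\<^sup>N M (lqi g) \<noteq> \<top>" using assms(1) by (metis ennreal_neq_top neq_top_trans)
  have "enn2real (integral\<^sup>N M (lqi g)) \<le> r" using assms by (simp add: enn2real_leI)
  then have "(enn2real (integral\<^sup>N M (lqi g)))\<^sup>2 \<le> r\<^sup>2" by (intro power_mono) (auto simp: enn2real_nonneg)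
  then show "Lp_qnorm M (1/2) g \<le> ennreal (r\<^sup>2)" using nt by (simp add: Lp_half)
  show "Lp_qnorm M (1/2) g < \<top>" using nt by (simp add: Lp_half)
qed

lemma Lp_lower:
  assumes "ennreal r \<le> integral\<^sup>N M (lqi g)" "0 \<le> r"
  shows "ennreal (r\<^sup>2) \<le> Lp_qnorm M (1/2) g"
proof (cases "integral\<^sup>N M (lqi g) = \<top>")
  case True then show ?thesis by (simp add: Lp_half)
next
  case False
  have "r \<le> enn2real (integral\<^sup>N M (lqi g))" using enn2real_mono[OF assms(1)] False assms(2)
    by (simp add: less_top)
  then have "r\<^sup>2 \<le> (enn2real (integral\<^sup>N M (lqi g)))\<^sup>2" by (rule power_mono) (use assms in simp)
  then show ?thesis using False by (simp add: Lp_half)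
qed

lemma lqi_le: assumes "g x \<le> ennreal a" "0 \<le> a" shows "lqi g x \<le> ennreal (sqrt a)"
proof -
  have "g x \<noteq> \<top>" using assms(1) by (metis ennreal_neq_top neq_top_trans)
  moreover have "enn2real (g x) \<le> a" using assms by (simp add: enn2real_leI)
  ultimately show ?thesis using assms by (simp add: lqi_def powr_half_sqrt enn2real_nonneg)
qed

lemma lqi_ge: assumes "ennreal a \<le> g x" "0 \<le> a" shows "ennreal (sqrt a) \<le> lqi g x"
proof (cases "g x = \<top>")
  case False
  have "a \<le> enn2real (g x)" using enn2real_mono[OF assms(1)] False assms(2) by (simp add: less_top)
  then show ?thesis using False assms by (simp add: lqi_def powr_half_sqrt enn2real_nonneg)
qed (simp add: lqi_def)

lemma Hp_fN:
  assumes m2: "\<forall>k. 2 \<le> m k"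
  shows "Hp_norm m (1/2) (fN m N) \<le> ennreal (real (vM m (Suc N)) / (real (vM m N))\<^sup>2)"
    "Hp_norm m (1/2) (fN m N) < \<top>"
proof -
  have mpos: "\<And>k. m k > 0" using m2 by (metis not_numeral_le_zero not_gr0)
  define C where "C = cyl m N (\<lambda>_. 0)"
  have Cs: "C \<in> sets (vilenkin_measure m)" unfolding C_def using mpos by (intro sets_cyl) auto
  have Cm: "emeasure (vilenkin_measure m) C = ennreal (1 / real (vM m N))"
    unfolding C_def using mpos by (intro emeasure_cyl) auto
  define a where "a = sqrt (real (vM m (Suc N)))"
  have pw: "lqi (mart_max (fN m N)) x \<le> ennreal a * indicator C x" if x: "x \<in> space (vilenkin_measure m)" for x
  proof (cases "zI N x")
    case True
    have "cmod (fN m N n x) \<le> real (vM m (Suc N))" for n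
    proof -
      have le: "vM m N \<le> vM m (Suc N)" using vM_mono[OF m2, of N "Suc N"] by simp
      show ?thesis using True le by (auto simp: fN_def zI_Suc of_nat_diff[symmetric] simp del: of_nat_diff)
    qed
    then have "mart_max (fN m N) x \<le> ennreal (real (vM m (Suc N)))"
      unfolding mart_max_def by (intro SUP_least ennreal_leI) 
    then have "lqi (mart_max (fN m N)) x \<le> ennreal a" unfolding a_def using lqi_le[of "mart_max (fN m N)" x] by simp
    moreover have "x \<in> C" using True x by (simp add: C_def cyl_def zI_def)
    ultimately show ?thesis by simp
  next
    case False
    then have "\<And>n. fN m N n x = 0" by (simp add: fN_def zI_Suc)
    then have "mart_max (fN m N) x = 0" by (simp add: mart_max_def)
    then show ?thesis by (simp add: lqi_def)
  qed
  have "integral\<^sup>N (vilenkin_measure m) (lqi (mart_max (fN m N))) \<le> (\<integral>\<^sup>+x. ennreal a * indicator C x \<partial>vilenkin_measure m)"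
    by (rule nn_integral_mono) (rule pw)
  also have "\<dots> = ennreal (a / real (vM m N))"
    using Cs Cm by (simp add: nn_integral_cmult_indicator ennreal_mult[symmetric] a_def)
  finally have I: "integral\<^sup>N (vilenkin_measure m) (lqi (mart_max (fN m N))) \<le> ennreal (a / real (vM m N))" .
  have "(a / real (vM m N))\<^sup>2 = real (vM m (Suc N)) / (real (vM m N))\<^sup>2"
    by (simp add: a_def power_divide)
  then show "Hp_norm m (1/2) (fN m N) \<le> ennreal (real (vM m (Suc N)) / (real (vM m N))\<^sup>2)"
    using Lp_upper(1)[OF I] by (simp add: Hp_norm_def a_def)
  show "Hp_norm m (1/2) (fN m N) < \<top>"
    using Lp_upper(2)[OF I] by (simp add: Hp_norm_def a_def)
qed

lemma w_le:
  fixes a b B K :: real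
  assumes a: "a > 0" and ab: "2 * a \<le> b" and bB: "b \<le> B * a" and K: "K > 0"
  shows "sqrt (1 / (B * K)) \<le> sqrt (a * b / K) * (1 / a - 1 / b)"
proof -
  have b: "b > 0" using a ab by simp
  have "B * a > 0" using b bB by linarith
  then have B: "B > 0" using a by (simp add: zero_less_mult_iff)
  have "1 / b \<le> 1 / a - 1 / b" using a b ab by (simp add: field_simps)
  then have "sqrt (a * b / K) * (1 / b) \<le> sqrt (a * b / K) * (1 / a - 1 / b)"
    by (intro mult_left_mono) (use a b K in auto)
  moreover have "sqrt (a * b / K) * (1 / b) = sqrt (a / (b * K))"
  proof -
    have "sqrt (a * b / K) * (1 / b) = sqrt (a * b / K) * sqrt (1 / b^2)" using b by (simp add: real_sqrt_divide)
    also have "\<dots> = sqrt (a / (b * K))" unfolding real_sqrt_mult[symmetric] using b by (simp add: power2_eq_square field_simps)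
    finally show ?thesis .
  qed
  moreover have "sqrt (1 / (B * K)) \<le> sqrt (a / (b * K))"
  proof (rule real_sqrt_le_mono)
    have "b * K \<le> a * (B * K)" using bB K by (simp add: mult.commute mult_right_mono)
    then show "1 / (B * K) \<le> a / (b * K)" using B K b by (simp add: field_simps)
  qed
  ultimately show ?thesis by linarith
qed

lemma lhs_lower:
  fixes \<phi> :: "nat \<Rightarrow> real"
  assumes m2: "\<forall>k. 2 \<le> m k" and mB: "\<forall>k. m k \<le> B"
    and phi1: "\<forall>n\<ge>1. \<phi> n \<ge> 1" and phim: "mono_on {1..} \<phi>"
  shows "ennreal ((real N)\<^sup>2 / (4 * real B * real (vM m N) * \<phi> (2 * vM m N))) \<le>
     Lp_qnorm (vilenkin_measure m) (1/2) (\<lambda>x. SUP n\<in>{1..}. ennreal (cmod (vfejer m (fN m N) n x) / \<phi> n))"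
    (is "_ \<le> Lp_qnorm _ _ ?G")
proof -
  have mpos: "\<And>k. m k > 0" using m2 by (metis not_numeral_le_zero not_gr0)
  define \<Phi> where "\<Phi> = \<phi> (2 * vM m N)"
  have MN: "vM m N > 0" using vM_pos[OF m2] .
  have \<Phi>1: "\<Phi> \<ge> 1" using phi1 MN by (simp add: \<Phi>_def)
  define K where "K = 4 * real (vM m N) * \<Phi>"
  have K: "K > 0" using MN \<Phi>1 by (simp add: K_def)
  define A where "A t = cyl m t (\<lambda>_. 0) - cyl m (Suc t) (\<lambda>_. 0)" for t
  define v where "v t = sqrt (real (vM m t * vM m (Suc t)) / K)" for t
  define w where "w = sqrt (1 / (real B * K))"
  have As: "A t \<in> sets (vilenkin_measure m)" for t
    unfolding A_def using mpos by (intro sets.Diff sets_cyl) auto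
  have pw1: "ennreal (v t) \<le> lqi ?G x" if x: "x \<in> space (vilenkin_measure m)" "x \<in> A t" and t: "t < N" for t x
  proof -
    have zx: "zI t x" and xt: "0 < x t" "x t < m t"
      using x by (auto simp: A_def cyl_def zI_def less_Suc_eq space_vm)
    define n where "n = vM m N + vM m (Suc t)"
    have tn: "vM m (Suc t) \<le> vM m N" using vM_mono[OF m2, of "Suc t" N] t by simp
    have n1: "1 \<le> n" using MN by (simp add: n_def)
    have n2: "n \<le> 2 * vM m N" using tn by (simp add: n_def)
    have pn: "\<phi> n \<le> \<Phi>" unfolding \<Phi>_def using n1 n2 by (intro mono_onD[OF phim]) auto
    have pn1: "\<phi> n \<ge> 1" using phi1 n1 by simp
    have f: "cmod (vfejer m (fN m N) n x) \<ge> real (vM m t * vM m (Suc t)) / (2 * real n)"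
      unfolding n_def by (rule fejer_fN[OF m2 t zx xt])
    have "real (vM m t * vM m (Suc t)) / K \<le> real (vM m t * vM m (Suc t)) / (2 * real n) / \<phi> n"
    proof -
      have "2 * real n * \<phi> n \<le> K" unfolding K_def
        using n2 pn pn1 by (intro order.trans[OF mult_mono[of "2 * real n" "4 * real (vM m N)" "\<phi> n" \<Phi>]]) auto
      then show ?thesis using pn1 n1 K
        by (simp add: divide_divide_eq_left) (intro divide_left_mono, auto)
    qed
    also have "\<dots> \<le> cmod (vfejer m (fN m N) n x) / \<phi> n"
      using f pn1 by (intro divide_right_mono) auto
    also have "ennreal (cmod (vfejer m (fN m N) n x) / \<phi> n) \<le> ?G x"
      using n1 by (intro SUP_upper) auto
    finally have "ennreal (real (vM m t * vM m (Suc t)) / K) \<le> ?G x" by (simp add: ennreal_leI order_trans)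
    then show ?thesis unfolding v_def using lqi_ge[of "real (vM m t * vM m (Suc t)) / K" ?G x] K by simp
  qed
  have disj: "t = s" if "x \<in> A t" "x \<in> A s" for x t s
  proof (rule ccontr)
    assume "t \<noteq> s"
    then consider "t < s" | "s < t" by linarith
    then show False using that by cases (auto simp: A_def cyl_def)
  qed
  define l where "l x = (\<Sum>t<N. ennreal (v t) * indicator (A t) x)" for x
  have pw: "l x \<le> lqi ?G x" if x: "x \<in> space (vilenkin_measure m)" for x
  proof (cases "\<exists>s<N. x \<in> A s")
    case True
    then obtain s where s: "s < N" "x \<in> A s" by auto
    have "l x = (\<Sum>t<N. if t = s then ennreal (v s) else 0)"
      unfolding l_def using disj s by (intro sum.cong refl) (auto simp: indicator_def)
    also have "\<dots> = ennreal (v s)" using s by simp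
    finally show ?thesis using pw1[OF x s(2) s(1)] by simp
  next
    case False
    then have "l x = 0" unfolding l_def by (intro sum.neutral) (auto simp: indicator_def)
    then show ?thesis by simp
  qed
  have eA: "emeasure (vilenkin_measure m) (A t) = ennreal (1 / real (vM m t) - 1 / real (vM m (Suc t)))" for t
  proof -
    have "emeasure (vilenkin_measure m) (A t) = emeasure (vilenkin_measure m) (cyl m t (\<lambda>_. 0)) - emeasure (vilenkin_measure m) (cyl m (Suc t) (\<lambda>_. 0))"
    proof -
      have "emeasure (vilenkin_measure m) (cyl m (Suc t) (\<lambda>_. 0)) \<noteq> \<top>" using mpos by (simp add: emeasure_cyl)
      moreover have "cyl m (Suc t) (\<lambda>_. 0) \<subseteq> cyl m t (\<lambda>_. 0)" by (auto simp: cyl_def)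
      ultimately show ?thesis unfolding A_def using mpos by (intro emeasure_Diff sets_cyl) auto
    qed
    also have "\<dots> = ennreal (1 / real (vM m t) - 1 / real (vM m (Suc t)))"
      using mpos vM_mono[OF m2, of t "Suc t"] vM_pos[OF m2, of t]
      by (simp add: emeasure_cyl ennreal_minus frac_le)
    finally show ?thesis .
  qed
  have trm: "ennreal w \<le> ennreal (v t) * emeasure (vilenkin_measure m) (A t)" for t
  proof -
    have a: "real (vM m t) > 0" using vM_pos[OF m2] by simp
    have ab: "2 * real (vM m t) \<le> real (vM m (Suc t))" using m2 by (simp add: vM_Suc) (metis mult_le_mono1 of_nat_le_iff of_nat_mult of_nat_numeral spec)
    have bB: "real (vM m (Suc t)) \<le> real B * real (vM m t)" using mB by (simp add: vM_Suc) (metis mult_le_mono1 of_nat_le_iff of_nat_mult spec)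
    have "w \<le> v t * (1 / real (vM m t) - 1 / real (vM m (Suc t)))"
      unfolding w_def v_def using w_le[OF a ab bB K] by simp
    then have "ennreal w \<le> ennreal (v t * (1 / real (vM m t) - 1 / real (vM m (Suc t))))" by (rule ennreal_leI)
    also have "\<dots> = ennreal (v t) * ennreal (1 / real (vM m t) - 1 / real (vM m (Suc t)))"
    proof (rule ennreal_mult)
      show "0 \<le> v t" using K by (simp add: v_def)
      show "0 \<le> 1 / real (vM m t) - 1 / real (vM m (Suc t))" using a ab by (simp add: frac_le)
    qed
    finally show ?thesis unfolding eA .
  qed
  have "ennreal (real N * w) = (\<Sum>t<N. ennreal w)"
    by (simp add: ennreal_of_nat_eq_real_of_nat) (rule ennreal_mult, simp, use K in \<open>simp add: w_def\<close>)
  also have "\<dots> \<le> (\<Sum>t<N. ennreal (v t) * emeasure (vilenkin_measure m) (A t))" by (intro sum_mono trm)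
  also have "\<dots> = integral\<^sup>N (vilenkin_measure m) l"
    unfolding l_def using As by (subst nn_integral_sum) (auto simp: nn_integral_cmult_indicator)
  also have "\<dots> \<le> integral\<^sup>N (vilenkin_measure m) (lqi ?G)" by (rule nn_integral_mono) (rule pw)
  finally have I: "ennreal (real N * w) \<le> integral\<^sup>N (vilenkin_measure m) (lqi ?G)" .
  have "(real N * w)\<^sup>2 = (real N)\<^sup>2 / (4 * real B * real (vM m N) * \<Phi>)"
  proof -
    have "0 \<le> 1 / (real B * K)" using K by simp
    then have "w\<^sup>2 = 1 / (real B * K)" unfolding w_def by (rule real_sqrt_pow2)
    then show ?thesis by (simp add: power_mult_distrib K_def mult_ac)
  qed
  with Lp_lower[OF I] K show ?thesis unfolding \<Phi>_def by (simp add: w_def)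
qed

lemma vM_le_pow: assumes "\<forall>k. m k \<le> B" shows "vM m k \<le> B ^ k"
proof (induction k)
  case (Suc k) then show ?case using assms by (simp add: vM_Suc mult_le_mono)
qed simp

theorem corollary1:
  fixes m :: "nat \<Rightarrow> nat" and \<phi> :: "nat \<Rightarrow> real" and b :: real
  assumes m_ge2: "\<And>k. m k \<ge> 2"
    and m_bdd: "\<exists>B. \<forall>k. m k \<le> B"
    and log_base: "b > 1"
    and phi_ge1: "\<And>n. n \<ge> 1 \<Longrightarrow> \<phi> n \<ge> 1"
    and phi_mono: "mono_on {1..} \<phi>"
    and phi_limsup: "limsup (\<lambda>n. ereal ((log b (real n + 1))\<^sup>2 / \<phi> n)) = \<infinity>"
  shows "\<not> (\<exists>c::real. \<forall>f. vmartingale m f \<and> Hp_norm m (1/2) f < \<top> \<longrightarrow>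
            Lp_qnorm (vilenkin_measure m) (1/2)
               (\<lambda>x. SUP n\<in>{1..}. ennreal (cmod (vfejer m f n x) / \<phi> n))
            \<le> ennreal c * Hp_norm m (1/2) f)"
proof
  assume "\<exists>c::real. \<forall>f. vmartingale m f \<and> Hp_norm m (1/2) f < \<top> \<longrightarrow>
            Lp_qnorm (vilenkin_measure m) (1/2)
               (\<lambda>x. SUP n\<in>{1..}. ennreal (cmod (vfejer m f n x) / \<phi> n))
            \<le> ennreal c * Hp_norm m (1/2) f"
  then obtain c :: real where hc: "\<And>f. vmartingale m f \<Longrightarrow> Hp_norm m (1/2) f < \<top> \<Longrightarrow>
            Lp_qnorm (vilenkin_measure m) (1/2)
               (\<lambda>x. SUP n\<in>{1..}. ennreal (cmod (vfejer m f n x) / \<phi> n))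
            \<le> ennreal c * Hp_norm m (1/2) f" by blast
  have m2: "\<forall>k. 2 \<le> m k" using m_ge2 by blast
  obtain B where mB: "\<forall>k. m k \<le> B" using m_bdd by blast
  have B2: "2 \<le> B" using m2 mB by (metis order.trans spec)
  have phi1: "\<forall>n\<ge>1. \<phi> n \<ge> 1" using phi_ge1 by blast
  define C where "C = log b (2 * real B)"
  have C: "C > 0" unfolding C_def using log_base B2 by simp
  define K where "K = 16 * C\<^sup>2 * (real B)\<^sup>2 * (\<bar>c\<bar> + 1)"
  let ?u = "\<lambda>n. ereal ((log b (real n + 1))\<^sup>2 / \<phi> n)"
  have "(INF k. SUP j\<in>{k..}. ?u j) \<le> (SUP j\<in>{2 * m 0..}. ?u j)" by (rule INF_lower) simp
  then have "\<infinity> \<le> (SUP k\<in>{2 * m 0..}. ?u k)"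
    using phi_limsup unfolding limsup_INF_SUP by simp
  then have "ereal K < (SUP k\<in>{2 * m 0..}. ?u k)" by (simp add: top_unique)
  then obtain n where n0: "2 * m 0 \<le> n" and nK: "ereal K < ?u n" by (auto simp: less_SUP_iff)
  have nK': "K < (log b (real n + 1))\<^sup>2 / \<phi> n" using nK by simp
  have ex: "\<exists>k. n < 2 * vM m (Suc k)" using vM_gt[OF m2, of "Suc n"] by (intro exI[of _ n]) simp
  define N where "N = (LEAST k. n < 2 * vM m (Suc k))"
  have N1: "n < 2 * vM m (Suc N)" unfolding N_def by (rule LeastI_ex[OF ex])
  have Npos: "N \<ge> 1"
  proof (rule ccontr)
    assume "\<not> N \<ge> 1"
    then have "N = 0" by simp
    then show False using N1 n0 by (simp add: vM_Suc)
  qed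
  have N2: "2 * vM m N \<le> n"
  proof -
    have "\<not> n < 2 * vM m (Suc (N - 1))" unfolding N_def
      using Npos by (intro not_less_Least) (auto simp: N_def)
    then show ?thesis using Npos by simp
  qed
  define \<Phi> where "\<Phi> = \<phi> (2 * vM m N)"
  have MN: "vM m N > 0" using vM_pos[OF m2] .
  have \<Phi>n: "\<Phi> \<le> \<phi> n" unfolding \<Phi>_def using N2 MN by (intro mono_onD[OF phi_mono]) auto
  have \<Phi>1: "\<Phi> \<ge> 1" unfolding \<Phi>_def using phi1 MN by simp
  have pn: "\<phi> n > 0" using \<Phi>n \<Phi>1 by linarith
  have logle: "log b (real n + 1) \<le> real (Suc N) * C"
  proof -
    have "real n + 1 \<le> 2 * real (vM m (Suc N))" using N1 by linarith
    also have "\<dots> \<le> 2 * real B ^ Suc N"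
    proof -
      have "real (vM m (Suc N)) \<le> real (B ^ Suc N)" using vM_le_pow[OF mB, of "Suc N"] by (simp only: of_nat_le_iff)
      then show ?thesis by simp
    qed
    also have "\<dots> \<le> (2 * real B) ^ Suc N"
    proof -
      have "(1::real) \<le> 2 ^ N" by simp
      then have "(2::real) \<le> 2 ^ Suc N" by simp
      then have "2 * real B ^ Suc N \<le> 2 ^ Suc N * real B ^ Suc N" by (rule mult_right_mono) simp
      then show ?thesis by (simp only: power_mult_distrib)
    qed
    finally have "log b (real n + 1) \<le> log b ((2 * real B) ^ Suc N)"
      using log_base B2 by simp
    also have "\<dots> = real (Suc N) * C" unfolding C_def by (rule log_nat_power) simp
    finally show ?thesis .
  qed
  have log0: "0 \<le> log b (real n + 1)" using log_base by simp
  have "(log b (real n + 1))\<^sup>2 \<le> (real (Suc N) * C)\<^sup>2" by (rule power_mono[OF logle log0])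
  also have "\<dots> \<le> (2 * real N * C)\<^sup>2" using Npos C by (intro power_mono mult_right_mono) auto
  finally have logsq: "(log b (real n + 1))\<^sup>2 \<le> 4 * (real N)\<^sup>2 * C\<^sup>2" by (simp add: power_mult_distrib)
  have "K * \<phi> n < (log b (real n + 1))\<^sup>2" using nK' pn by (simp add: field_simps)
  then have "K * \<Phi> < 4 * (real N)\<^sup>2 * C\<^sup>2"
    using logsq \<Phi>n C by (smt (verit) K_def mult_left_mono zero_le_power2 mult_nonneg_nonneg abs_ge_zero of_nat_0_le_iff)
  moreover have "K * \<Phi> = (4 * C\<^sup>2) * (4 * (real B)\<^sup>2 * (\<bar>c\<bar> + 1) * \<Phi>)" by (simp add: K_def algebra_simps)
  moreover have "4 * (real N)\<^sup>2 * C\<^sup>2 = (4 * C\<^sup>2) * (real N)\<^sup>2" by simp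
  moreover have "0 < 4 * C\<^sup>2" using C by simp
  ultimately have key: "4 * (real B)\<^sup>2 * (\<bar>c\<bar> + 1) * \<Phi> < (real N)\<^sup>2"
    by (metis mult_less_cancel_left_pos)
  have H1: "Hp_norm m (1/2) (fN m N) \<le> ennreal (real (vM m (Suc N)) / (real (vM m N))\<^sup>2)"
    and H2: "Hp_norm m (1/2) (fN m N) < \<top>" using Hp_fN[OF m2] by auto
  have L: "ennreal ((real N)\<^sup>2 / (4 * real B * real (vM m N) * \<Phi>)) \<le> ennreal c * Hp_norm m (1/2) (fN m N)"
    using order.trans[OF lhs_lower[OF m2 mB phi1 phi_mono, of N] hc[OF fN_mart[OF m2] H2]]
    unfolding \<Phi>_def .
  have posL: "(real N)\<^sup>2 / (4 * real B * real (vM m N) * \<Phi>) > 0" using Npos B2 MN \<Phi>1 by simp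
  show False
  proof (cases "c > 0")
    case False
    then have "ennreal c = 0" by (simp add: ennreal_eq_0_iff)
    with L have "ennreal ((real N)\<^sup>2 / (4 * real B * real (vM m N) * \<Phi>)) = 0" by simp
    then have "(real N)\<^sup>2 / (4 * real B * real (vM m N) * \<Phi>) \<le> 0" by (simp only: ennreal_eq_0_iff)
    with posL show False by linarith
  next
    case True
    have "ennreal c * Hp_norm m (1/2) (fN m N) \<le> ennreal c * ennreal (real (vM m (Suc N)) / (real (vM m N))\<^sup>2)"
      by (intro mult_left_mono H1) simp
    also have "\<dots> = ennreal (c * (real (vM m (Suc N)) / (real (vM m N))\<^sup>2))"
      using True by (intro ennreal_mult[symmetric]) auto
    finally have E: "ennreal c * Hp_norm m (1/2) (fN m N) \<le> ennreal (c * (real (vM m (Suc N)) / (real (vM m N))\<^sup>2))" .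
    have "ennreal ((real N)\<^sup>2 / (4 * real B * real (vM m N) * \<Phi>)) \<le> ennreal (c * (real (vM m (Suc N)) / (real (vM m N))\<^sup>2))"
      using L E by (rule order.trans)
    then have "(real N)\<^sup>2 / (4 * real B * real (vM m N) * \<Phi>) \<le> c * (real (vM m (Suc N)) / (real (vM m N))\<^sup>2)"
      by (subst (asm) ennreal_le_iff) (use True in auto)
    also have "\<dots> \<le> c * (real B / real (vM m N))"
    proof -
      have "real (m N) \<le> real B" using mB by simp
      then have "real (vM m (Suc N)) \<le> real B * real (vM m N)" by (simp add: vM_Suc mult_right_mono)
      then have "real (vM m (Suc N)) / (real (vM m N))\<^sup>2 \<le> real B / real (vM m N)"
        using MN by (simp add: field_simps power2_eq_square)
      then show ?thesis using True by (intro mult_left_mono) auto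
    qed
    finally have "(real N)\<^sup>2 \<le> 4 * c * (real B)\<^sup>2 * \<Phi>"
      using MN B2 \<Phi>1 by (simp add: field_simps power2_eq_square)
    moreover have "4 * c * (real B)\<^sup>2 * \<Phi> \<le> 4 * (real B)\<^sup>2 * (\<bar>c\<bar> + 1) * \<Phi>"
    proof -
      have "c * (4 * (real B)\<^sup>2 * \<Phi>) \<le> (\<bar>c\<bar> + 1) * (4 * (real B)\<^sup>2 * \<Phi>)"
        using \<Phi>1 by (intro mult_right_mono) auto
      then show ?thesis by (simp add: mult_ac)
    qed
    ultimately show False using key by linarith
  qed
qed

end
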